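(* Let $d\ge2$ and let $a_1,\ldots,a_d>1$ be real numbers with $\frac1{a_1}+\cdots+\frac1{a_d}=1$. Let $S=\operatorname{conv}(\{0,a_1e_1,\ldots,a_de_d\})\subseteq\mathbb{R}^d$. Then for $v\in\mathbb{R}^d$, the translate $S+v$ contains no integral point in its interior if and only if $v\in\mathbb{Z}^d$.
   Context: $e_1,\ldots,e_d$ are the standard unit vectors of $\mathbb{R}^d$. *)

theory Defs
  imports "HOL-Analysis.Analysis"
begin

definition integral_point :: "real ^ 'n \<Rightarrow> bool" where
  "integral_point x \<longleftrightarrow> (\<forall>i. x $ i \<in> \<int>)"

definition coord_simplex :: "(real ^ 'n) \<Rightarrow> (real ^ 'n) set" where
  "coord_simplex a = convex hull (insert 0 {a $ i *\<^sub>R axis i 1 | i. True})"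

end

theory Submission
  imports Defs
begin

definition Tset :: "real ^ 'n \<Rightarrow> (real ^ 'n) set" where
  "Tset a = {x. (\<forall>i. 0 \<le> x $ i) \<and> (\<Sum>i\<in>UNIV. x $ i / a $ i) \<le> 1}"

lemma convex_Tset:
  assumes "\<And>i. a $ i > 0"
  shows "convex (Tset a)"
  unfolding convex_def Tset_def
proof (clarify, intro conjI allI)
  fix x y :: "real ^ 'a" and u v :: real
  assume x: "\<forall>i. 0 \<le> x $ i" "(\<Sum>i\<in>UNIV. x $ i / a $ i) \<le> 1"
     and y: "\<forall>i. 0 \<le> y $ i" "(\<Sum>i\<in>UNIV. y $ i / a $ i) \<le> 1"
     and uv: "0 \<le> u" "0 \<le> v" "u + v = 1"
  fix i show "0 \<le> (u *\<^sub>R x + v *\<^sub>R y) $ i" using x y uv by simp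
next
  fix x y :: "real ^ 'a" and u v :: real
  assume x: "\<forall>i. 0 \<le> x $ i" "(\<Sum>i\<in>UNIV. x $ i / a $ i) \<le> 1"
     and y: "\<forall>i. 0 \<le> y $ i" "(\<Sum>i\<in>UNIV. y $ i / a $ i) \<le> 1"
     and uv: "0 \<le> u" "0 \<le> v" "u + v = 1"
  have "(\<Sum>i\<in>UNIV. (u *\<^sub>R x + v *\<^sub>R y) $ i / a $ i)
      = u * (\<Sum>i\<in>UNIV. x $ i / a $ i) + v * (\<Sum>i\<in>UNIV. y $ i / a $ i)"
    by (simp add: sum_distrib_left sum.distrib add_divide_distrib)
  also have "\<dots> \<le> u * 1 + v * 1"
    using x y uv by (intro add_mono mult_left_mono) auto
  finally show "(\<Sum>i\<in>UNIV. (u *\<^sub>R x + v *\<^sub>R y) $ i / a $ i) \<le> 1" using uv by simp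
qed

lemma simplex_sub_Tset:
  assumes "\<And>i. a $ i > 0"
  shows "coord_simplex a \<subseteq> Tset a"
  unfolding coord_simplex_def
proof (rule hull_minimal)
  show "convex (Tset a)" using convex_Tset assms .
  show "insert 0 {a $ i *\<^sub>R axis i 1 |i. True} \<subseteq> Tset a"
  proof (rule subsetI)
    fix p :: "real ^ _" assume "p \<in> insert 0 {a $ i *\<^sub>R axis i 1 |i. True}"
    then consider "p = 0" | i where "p = a $ i *\<^sub>R axis i 1" by blast
    then show "p \<in> Tset a"
    proof cases
      case 1 then show ?thesis by (simp add: Tset_def)
    next
      case (2 i)
      note pi = this
      have ai: "a $ i \<noteq> 0" using assms[of i] by simp
      have "(\<Sum>k\<in>UNIV. p $ k / a $ k) = (\<Sum>k\<in>UNIV. if k = i then 1 else 0)"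
        using assms ai pi by (intro sum.cong) (auto simp: axis_def)
      also have "\<dots> = 1" by simp
      finally have "(\<Sum>k\<in>UNIV. p $ k / a $ k) \<le> 1" by simp
      moreover have "\<forall>j. 0 \<le> p $ j" using assms[of i] pi by (simp add: axis_def)
      ultimately show ?thesis by (simp add: Tset_def)
    qed
  qed
qed

lemma interior_Tset:
  assumes "\<And>i. a $ i > 0" and "x \<in> interior (Tset a)"
  shows "(\<forall>i. 0 < x $ i) \<and> (\<Sum>i\<in>UNIV. x $ i / a $ i) < 1"
proof -
  obtain e where e: "e > 0" "ball x e \<subseteq> Tset a"
    using assms(2) mem_interior by blast
  have pos: "0 < x $ i" for i
  proof -
    have "x - (e/2) *\<^sub>R axis i 1 \<in> ball x e" using e
      by (simp add: dist_norm)
    then have "x - (e/2) *\<^sub>R axis i 1 \<in> Tset a" using e by blast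
    then have "0 \<le> (x - (e/2) *\<^sub>R axis i 1) $ i" unfolding Tset_def by blast
    then show ?thesis using e by simp
  qed
  obtain j :: 'a where True by blast
  have "x + (e/2) *\<^sub>R axis j 1 \<in> ball x e" using e
    by (simp add: dist_norm)
  then have "x + (e/2) *\<^sub>R axis j 1 \<in> Tset a" using e by blast
  then have le: "(\<Sum>k\<in>UNIV. (x + (e/2) *\<^sub>R axis j 1) $ k / a $ k) \<le> 1"
    unfolding Tset_def by blast
  have "(\<Sum>k\<in>UNIV. (x + (e/2) *\<^sub>R axis j 1) $ k / a $ k)
      = (\<Sum>k\<in>UNIV. x $ k / a $ k) + (\<Sum>k\<in>UNIV. (if k = j then (e/2) / a $ j else 0))"
    by (subst sum.distrib[symmetric], rule sum.cong) (auto simp: axis_def add_divide_distrib)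
  also have "(\<Sum>k\<in>UNIV. (if k = j then (e/2) / a $ j else 0)) = (e/2) / a $ j" by simp
  finally have "(\<Sum>k\<in>UNIV. x $ k / a $ k) + (e/2) / a $ j \<le> 1" using le by simp
  moreover have "(e/2) / a $ j > 0" using e assms(1)[of j] by simp
  ultimately show ?thesis using pos by simp
qed

lemma open_U:
  assumes "\<And>i. a $ i > 0"
  shows "open {x :: real ^ 'n. (\<forall>i. 0 < x $ i) \<and> (\<Sum>i\<in>UNIV. x $ i / a $ i) < 1}"
proof -
  have "{x :: real ^ 'n. (\<forall>i. 0 < x $ i) \<and> (\<Sum>i\<in>UNIV. x $ i / a $ i) < 1}
     = (\<Inter>i. {x. 0 < x $ i}) \<inter> {x. (\<Sum>i\<in>UNIV. x $ i / a $ i) < 1}" by auto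
  moreover have "open (\<Inter>i. {x :: real ^ 'n. 0 < x $ i})"
    by (intro open_INT finite_UNIV ballI open_Collect_less continuous_intros) auto
  moreover have "open {x :: real ^ 'n. (\<Sum>i\<in>UNIV. x $ i / a $ i) < 1}"
    using assms by (intro open_Collect_less continuous_intros) (auto simp: less_imp_neq[symmetric])
  ultimately show ?thesis by auto
qed

lemma U_sub_simplex:
  assumes "\<And>i. a $ i > 0"
    and x: "\<forall>i. 0 < x $ i" "(\<Sum>i\<in>UNIV. x $ i / a $ i) < 1"
  shows "x \<in> coord_simplex a"
proof -
  let ?C = "coord_simplex a"
  have cC: "convex ?C" unfolding coord_simplex_def by simp
  have pts: "a $ i *\<^sub>R axis i 1 \<in> ?C" for i
    unfolding coord_simplex_def by (rule hull_inc) blast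
  have z: "0 \<in> ?C" unfolding coord_simplex_def by (rule hull_inc) blast
  define s where "s = (\<Sum>i\<in>UNIV. x $ i / a $ i)"
  obtain j :: 'a where True by blast
  have "s \<ge> x $ j / a $ j" unfolding s_def
    using x assms by (intro member_le_sum) (auto intro: divide_nonneg_pos less_imp_le)
  moreover have "x $ j / a $ j > 0" using x assms(1)[of j] by simp
  ultimately have spos: "s > 0" by linarith
  define y :: "real ^ _" where "y = (\<Sum>i\<in>UNIV. ((x $ i / a $ i) / s) *\<^sub>R (a $ i *\<^sub>R axis i 1))"
  have "y \<in> ?C" unfolding y_def
  proof (rule convex_sum[OF _ cC])
    show "finite (UNIV :: 'a set)" by simp
    have "(\<Sum>i\<in>UNIV. x $ i / a $ i / s) = s / s"
      unfolding sum_divide_distrib[symmetric] s_def ..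
    then show "(\<Sum>i\<in>UNIV. x $ i / a $ i / s) = 1" using spos by simp
    show "\<And>i. 0 \<le> x $ i / a $ i / s" using x assms spos
      by (intro divide_nonneg_pos) (auto intro: divide_nonneg_pos less_imp_le)
    show "\<And>i. a $ i *\<^sub>R axis i 1 \<in> ?C" by (rule pts)
  qed
  have "s *\<^sub>R y = x"
  proof (subst vec_eq_iff, rule allI)
    fix k
    have "(s *\<^sub>R y) $ k = s * (\<Sum>i\<in>UNIV. (x $ i / a $ i / s) * (a $ i * (if k = i then 1 else 0)))"
      unfolding y_def by (simp only: vector_scaleR_component sum_component axis_def vec_lambda_beta real_scaleR_def)
    also have "(\<Sum>i\<in>UNIV. (x $ i / a $ i / s) * (a $ i * (if k = i then 1 else 0)))
        = (\<Sum>i\<in>UNIV. if i = k then (x $ k / a $ k / s) * a $ k else 0)"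
      by (rule sum.cong) auto
    also have "s * \<dots> = s * ((x $ k / a $ k / s) * a $ k)"
      by simp
    also have "\<dots> = x $ k" using spos assms(1)[of k] by simp
    finally show "(s *\<^sub>R y) $ k = x $ k" .
  qed
  moreover have "s *\<^sub>R y + (1 - s) *\<^sub>R 0 \<in> ?C"
    by (rule convexD[OF cC \<open>y \<in> ?C\<close> z]) (use spos x(2) s_def in auto)
  ultimately show ?thesis by simp
qed

theorem mainTheorem17:
  fixes a v :: "real ^ 'n"
  assumes "CARD('n) \<ge> 2"
    and "\<And>i. a $ i > 1"
    and "(\<Sum>i\<in>UNIV. 1 / a $ i) = 1"
  shows "(\<not> (\<exists>x\<in>interior ((\<lambda>y. y + v) ` coord_simplex a). integral_point x))
         \<longleftrightarrow> integral_point v"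
proof -
  have apos: "\<And>i. a $ i > 0" using assms(2) by (meson less_trans zero_less_one)
  have img: "(\<lambda>y. y + v) ` coord_simplex a = (+) v ` coord_simplex a"
    by (auto simp: add.commute)
  have int: "interior ((\<lambda>y. y + v) ` coord_simplex a) = (+) v ` interior (coord_simplex a)"
    unfolding img by (rule interior_translation)
  show ?thesis
  proof
    assume H: "\<not> (\<exists>x\<in>interior ((\<lambda>y. y + v) ` coord_simplex a). integral_point x)"
    show "integral_point v"
    proof (rule ccontr)
      assume nv: "\<not> integral_point v"
      then obtain j where j: "v $ j \<notin> \<int>" unfolding integral_point_def by blast
      define z :: "real ^ 'n" where "z = (\<chi> i. of_int (floor (v $ i)) + 1)"
      define w where "w = z - v"
      have wpos: "0 < w $ i" for i
        unfolding w_def z_def by simp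
      have wle: "w $ i \<le> 1" for i
        unfolding w_def z_def by simp
      have wlt: "w $ j < 1"
      proof -
        have "of_int (floor (v $ j)) \<noteq> v $ j" using j by (metis Ints_of_int)
        then have "of_int (floor (v $ j)) < v $ j" by (meson of_int_floor_le order_le_less)
        then show ?thesis unfolding w_def z_def by simp
      qed
      have "(\<Sum>i\<in>UNIV. w $ i / a $ i) < (\<Sum>i\<in>UNIV. 1 / a $ i)"
      proof (rule sum_strict_mono_ex1)
        show "\<forall>i\<in>UNIV. w $ i / a $ i \<le> 1 / a $ i"
          using wle apos by (simp add: divide_right_mono less_imp_le)
        show "\<exists>i\<in>UNIV. w $ i / a $ i < 1 / a $ i"
          using wlt apos[of j] by (meson UNIV_I divide_strict_right_mono)
      qed simp
      then have "w \<in> interior (coord_simplex a)"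
      proof -
        let ?U = "{x :: real ^ 'n. (\<forall>i. 0 < x $ i) \<and> (\<Sum>i\<in>UNIV. x $ i / a $ i) < 1}"
        have "?U \<subseteq> interior (coord_simplex a)"
          using open_U[OF apos] U_sub_simplex[OF apos] by (intro interior_maximal) auto
        moreover have "w \<in> ?U" using wpos assms(3) \<open>(\<Sum>i\<in>UNIV. w $ i / a $ i) < (\<Sum>i\<in>UNIV. 1 / a $ i)\<close> by simp
        ultimately show ?thesis by blast
      qed
      then have "z \<in> interior ((\<lambda>y. y + v) ` coord_simplex a)"
        unfolding int w_def by (rule rev_image_eqI) simp
      moreover have "integral_point z" unfolding integral_point_def z_def by simp
      ultimately show False using H by blast
    qed
  next
    assume iv: "integral_point v"
    show "\<not> (\<exists>x\<in>interior ((\<lambda>y. y + v) ` coord_simplex a). integral_point x)"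
    proof
      assume "\<exists>x\<in>interior ((\<lambda>y. y + v) ` coord_simplex a). integral_point x"
      then obtain w where w: "w \<in> interior (coord_simplex a)" and iz: "integral_point (v + w)"
        unfolding int by blast
      have "w \<in> interior (Tset a)"
        using w interior_mono[OF simplex_sub_Tset[OF apos]] by blast
      from interior_Tset[OF apos this] have wp: "\<forall>i. 0 < w $ i"
        and ws: "(\<Sum>i\<in>UNIV. w $ i / a $ i) < 1" by auto
      have wint: "w $ i \<in> \<int>" for i
      proof -
        have "(v + w) $ i \<in> \<int>" "v $ i \<in> \<int>" using iz iv unfolding integral_point_def by auto
        then have "(v + w) $ i - v $ i \<in> \<int>" by (rule Ints_diff)
        then show ?thesis by simp
      qed
      have w1: "1 \<le> w $ i" for i
      proof -
        obtain k where "w $ i = of_int k" using wint[of i] by (auto elim: Ints_cases)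
        with wp[rule_format, of i] show ?thesis by simp
      qed
      have "(\<Sum>i\<in>UNIV. 1 / a $ i) \<le> (\<Sum>i\<in>UNIV. w $ i / a $ i)"
        using w1 apos by (intro sum_mono divide_right_mono) (auto intro: less_imp_le)
      then show False using ws assms(3) by simp
    qed
  qed
qed

end
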